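(* Let $m\in\mathbb{R}$, $0\le\delta\le\rho\le1$ with $\delta<1$, $a\in S^m_{\rho,\delta}$, and let $\eta\in C^\infty(\mathbb{R}^d)$ be supported in $\{|\xi|\le2\}$. Put $a_0(x,\xi)=a(x,\xi)\eta(\xi)$. Then there is $C$ independent of $w$ and $f$ such that $$\int_{\mathbb{R}^d}|T_{a_0}f|^2w\le C\int_{\mathbb{R}^d}|f|^2A_1^*w$$ for all non-negative $w\in L^1_{\mathrm{loc}}(\mathbb{R}^d)$ and all Schwartz $f$, where $A_1^*w(x)=\sup_{r\ge1}\frac1{|B(x,r)|}\int_{B(x,r)}w$.
   Context: The Hörmander class $S^m_{\rho,\delta}$ is the set of $a\in C^\infty(\mathbb{R}^d\times\mathbb{R}^d)$ with $|\partial_x^\nu\partial_\xi^\sigma a(x,\xi)|\le C_{\nu,\sigma}(1+|\xi|)^{m-\rho|\sigma|+\delta|\nu|}$ for all multi-indices $\nu,\sigma$. For a symbol $b$ and Schwartz $f$, $T_bf(x)=\int e^{ix\cdot\xi}b(x,\xi)\widehat f(\xi)d\xi$. $B(x,r)$ is the ball of centre $x$ and radius $r$. *)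

theory Defs
  imports "HOL-Analysis.Analysis"
begin

definition ddir :: "'a::real_normed_vector \<Rightarrow> ('a \<Rightarrow> 'b::real_normed_vector) \<Rightarrow> 'a \<Rightarrow> 'b" where
  "ddir v g x = frechet_derivative g (at x) v"

fun iter_ddir :: "'a::real_normed_vector list \<Rightarrow> ('a \<Rightarrow> 'b::real_normed_vector) \<Rightarrow> 'a \<Rightarrow> 'b" where
  "iter_ddir [] g = g"
| "iter_ddir (v # vs) g = ddir v (iter_ddir vs g)"

definition smooth :: "('a::real_normed_vector \<Rightarrow> 'b::real_normed_vector) \<Rightarrow> bool" where
  "smooth g \<longleftrightarrow> (\<forall>vs x. iter_ddir vs g differentiable (at x))"

definition xdir :: "'n::finite \<Rightarrow> (real^'n) \<times> (real^'n)" where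
  "xdir i = (axis i 1, 0)"

definition xidir :: "'n::finite \<Rightarrow> (real^'n) \<times> (real^'n)" where
  "xidir i = (0, axis i 1)"

text \<open>Hoermander class S^m_{rho,delta}; a multi-index derivative is given by lists of
  coordinate directions (order irrelevant for smooth functions).\<close>
definition hoermander :: "real \<Rightarrow> real \<Rightarrow> real \<Rightarrow> ((real^'n::finite) \<times> (real^'n) \<Rightarrow> complex) \<Rightarrow> bool" where
  "hoermander m \<rho> \<delta> a \<longleftrightarrow> smooth a \<and>
     (\<forall>(nu::'n list) (sigma::'n list). \<exists>C. \<forall>x \<xi>.
        norm (iter_ddir (map xdir nu @ map xidir sigma) a (x, \<xi>))
          \<le> C * (1 + norm \<xi>) powr (m - \<rho> * real (length sigma) + \<delta> * real (length nu)))"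

definition schwartz :: "(real^'n::finite \<Rightarrow> complex) \<Rightarrow> bool" where
  "schwartz f \<longleftrightarrow> smooth f \<and>
     (\<forall>(alpha::'n list) (k::nat). \<exists>C. \<forall>x.
        (1 + norm x) ^ k * norm (iter_ddir (map (\<lambda>i. axis i 1) alpha) f x) \<le> C)"

text \<open>Fourier transform (the normalising constant is irrelevant for the statement).\<close>
definition fourier :: "(real^'n::finite \<Rightarrow> complex) \<Rightarrow> real^'n \<Rightarrow> complex" where
  "fourier f \<xi> = (LINT x|lborel. cis (- (x \<bullet> \<xi>)) * f x)"

definition pdo :: "((real^'n::finite) \<times> (real^'n) \<Rightarrow> complex) \<Rightarrow> (real^'n \<Rightarrow> complex) \<Rightarrow> real^'n \<Rightarrow> complex" where
  "pdo b f x = (LINT \<xi>|lborel. cis (x \<bullet> \<xi>) * b (x, \<xi>) * fourier f \<xi>)"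

definition loc_integrable :: "(real^'n::finite \<Rightarrow> real) \<Rightarrow> bool" where
  "loc_integrable w \<longleftrightarrow> w \<in> borel_measurable lborel \<and>
     (\<forall>K. compact K \<longrightarrow> set_integrable lborel K w)"

definition A1star :: "(real^'n::finite \<Rightarrow> real) \<Rightarrow> real^'n \<Rightarrow> ennreal" where
  "A1star w x = (SUP r\<in>{1..}. (\<integral>\<^sup>+ y. ennreal (w y) * indicator (ball x r) y \<partial>lborel)
                                / emeasure lborel (ball x r))"

end

theory Submission
  imports Defs
begin


definition chain :: "(nat \<Rightarrow> real \<Rightarrow> complex) \<Rightarrow> bool" where
  "chain G \<longleftrightarrow> (\<forall>k s. (G k has_vector_derivative G (Suc k) s) (at s))"

fun Dh :: "real \<Rightarrow> nat \<Rightarrow> (real \<Rightarrow> complex) \<Rightarrow> real \<Rightarrow> complex" where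
  "Dh h 0 f = f"
| "Dh h (Suc n) f = (\<lambda>s. Dh h n f (s + h) - Dh h n f s)"

lemma Dh_comm: "Dh h n (\<lambda>s. f (s + h) - f s) = (\<lambda>s. Dh h n f (s + h) - Dh h n f s)"
  by (induction n) (auto simp: add.assoc)

lemma mvt_bound:
  assumes "\<And>s. (f has_vector_derivative f' s) (at s)" "\<And>s. norm (f' s) \<le> M"
  shows "norm (f b - f a) \<le> 3 * \<bar>b - a\<bar> * M"
proof -
  have "norm (f b - f a - (b - a) *\<^sub>R f' a) \<le> norm (b - a) * (2*M)"
  proof (rule vector_differentiable_bound_linearization[of UNIV f f' a b a "2*M"])
    show "\<And>x. x \<in> UNIV \<Longrightarrow> (f has_vector_derivative f' x) (at x within UNIV)" using assms(1) by simp
    show "\<And>x. x \<in> UNIV \<Longrightarrow> norm (f' x - f' a) \<le> 2*M"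
      using assms(2) by (smt (verit) norm_triangle_ineq4)
  qed auto
  moreover have "norm ((b - a) *\<^sub>R f' a) \<le> \<bar>b - a\<bar> * M"
    using assms(2)[of a] by (simp add: mult_left_mono)
  ultimately show ?thesis
    using norm_triangle_ineq[of "f b - f a - (b - a) *\<^sub>R f' a" "(b - a) *\<^sub>R f' a"] by simp
qed

lemma chain_shift:
  assumes "chain G"
  shows "chain (\<lambda>k s. G k (s + h) - G k s)"
  unfolding chain_def
proof (intro allI)
  fix k s
  have d1: "((\<lambda>s. s + h) has_vector_derivative 1) (at s)"
    by (auto intro!: derivative_eq_intros simp: has_real_derivative_iff_has_vector_derivative[symmetric])
  have "((G k \<circ> (\<lambda>s. s + h)) has_vector_derivative 1 *\<^sub>R G (Suc k) (s + h)) (at s)"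
    by (rule vector_diff_chain_at[OF d1]) (use assms in \<open>auto simp: chain_def\<close>)
  then have "((\<lambda>s. G k (s + h)) has_vector_derivative G (Suc k) (s + h)) (at s)"
    by (simp add: o_def)
  then show "((\<lambda>s. G k (s + h) - G k s) has_vector_derivative G (Suc k) (s + h) - G (Suc k) s) (at s)"
    using assms unfolding chain_def by (auto intro!: has_vector_derivative_diff)
qed

lemma Dh_bound:
  assumes "chain G" "\<And>s. norm (G N s) \<le> M"
  shows "norm (Dh h N (G 0) s) \<le> (3 * \<bar>h\<bar>)^N * M"
  using assms
proof (induction N arbitrary: G M s)
  case 0
  then show ?case by simp
next
  case (Suc N)
  define G' where "G' = (\<lambda>k s. G k (s + h) - G k s)"
  have c: "chain G'" unfolding G'_def by (rule chain_shift[OF Suc.prems(1)])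
  have b: "norm (G' N s) \<le> 3 * \<bar>h\<bar> * M" for s
    unfolding G'_def
    using mvt_bound[of "G N" "G (Suc N)" M "s + h" s] Suc.prems unfolding chain_def by auto
  have "Dh h (Suc N) (G 0) s = Dh h N (G' 0) s"
    unfolding G'_def by (simp add: Dh_comm)
  also have "norm \<dots> \<le> (3 * \<bar>h\<bar>)^N * (3 * \<bar>h\<bar> * M)"
    by (rule Suc.IH[OF c b])
  finally show ?case by (simp add: algebra_simps)
qed

lemma Dh_zero:
  assumes "\<And>s. \<bar>s - t\<bar> \<le> real n * \<bar>h\<bar> \<Longrightarrow> f s = 0"
  shows "Dh h n f t = 0"
  using assms
proof (induction n arbitrary: t)
  case 0 then show ?case by simp
next
  case (Suc n)
  have "Dh h n f (t + h) = 0"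
    by (rule Suc.IH) (use Suc.prems in \<open>auto simp: algebra_simps abs_if split: if_splits\<close>)
  moreover have "Dh h n f t = 0"
    by (rule Suc.IH) (use Suc.prems in \<open>auto simp: algebra_simps abs_if split: if_splits\<close>)
  ultimately show ?case by simp
qed

definition leib :: "(nat \<Rightarrow> real \<Rightarrow> complex) \<Rightarrow> (nat \<Rightarrow> real \<Rightarrow> complex) \<Rightarrow> nat \<Rightarrow> real \<Rightarrow> complex" where
  "leib G H k s = (\<Sum>j\<le>k. of_nat (k choose j) * G j s * H (k - j) s)"

lemma leib_Suc:
  "leib G H (Suc k) s = leib (\<lambda>k. G (Suc k)) H k s + leib G (\<lambda>k. H (Suc k)) k s"
proof -
  have "leib G H (Suc k) s = (\<Sum>j\<le>Suc k. of_nat (k choose j) * G j s * H (Suc k - j) s)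
      + (\<Sum>j\<le>Suc k. of_nat (if j = 0 then 0 else k choose (j - 1)) * G j s * H (Suc k - j) s)"
    unfolding leib_def sum.distrib[symmetric]
    by (intro sum.cong refl) (auto simp: algebra_simps gr0_conv_Suc)
  also have "(\<Sum>j\<le>Suc k. of_nat (k choose j) * G j s * H (Suc k - j) s) = leib G (\<lambda>k. H (Suc k)) k s"
    unfolding leib_def by (simp add: Suc_diff_le)
  also have "(\<Sum>j\<le>Suc k. of_nat (if j = 0 then 0 else k choose (j - 1)) * G j s * H (Suc k - j) s)
      = leib (\<lambda>k. G (Suc k)) H k s"
    unfolding leib_def by (subst sum.atMost_Suc_shift) simp
  finally show ?thesis by simp
qed

lemma chain_leib:
  assumes "chain G" "chain H"
  shows "chain (leib G H)"
  unfolding chain_def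
proof (intro allI)
  fix k s
  show "(leib G H k has_vector_derivative leib G H (Suc k) s) (at s)"
    using assms
  proof (induction k arbitrary: G H)
    case 0
    have "((\<lambda>s. G 0 s * H 0 s) has_vector_derivative G 0 s * H 1 s + G 1 s * H 0 s) (at s)"
      using 0 unfolding chain_def
      by (auto intro!: has_vector_derivative_mult)
    then show ?case by (simp add: leib_def algebra_simps)
  next
    case (Suc k)
    have c1: "chain (\<lambda>k. G (Suc k))" "chain (\<lambda>k. H (Suc k))" using Suc.prems unfolding chain_def by auto
    have e: "leib G H (Suc k) = (\<lambda>s. leib (\<lambda>k. G (Suc k)) H k s + leib G (\<lambda>k. H (Suc k)) k s)"
      by (rule ext) (rule leib_Suc)
    show ?case
      unfolding e leib_Suc[of G H "Suc k"]
      using Suc.IH[OF c1(1) Suc.prems(2)] Suc.IH[OF Suc.prems(1) c1(2)]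
      by (auto intro!: has_vector_derivative_add)
  qed
qed



lemma smooth_cont: "smooth g \<Longrightarrow> continuous_on UNIV (iter_ddir vs g)"
  unfolding smooth_def
  by (meson continuous_at_imp_continuous_on differentiable_imp_continuous_within)

lemma smooth_line_deriv:
  fixes g :: "'a::real_normed_vector \<Rightarrow> 'b::real_normed_vector"
  assumes "smooth g"
  shows "((\<lambda>s. iter_ddir vs g (p + s *\<^sub>R v)) has_vector_derivative iter_ddir (v # vs) g (p + s *\<^sub>R v)) (at s)"
proof -
  define q where "q = p + s *\<^sub>R v"
  define F where "F = iter_ddir vs g"
  have dF: "(F has_derivative frechet_derivative F (at q)) (at q)"
    using assms unfolding smooth_def F_def by (simp add: frechet_derivative_works[symmetric])
  have dl: "((\<lambda>s. p + s *\<^sub>R v) has_derivative (\<lambda>t. t *\<^sub>R v)) (at s)"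
    by (auto intro!: derivative_eq_intros)
  have "((F \<circ> (\<lambda>s. p + s *\<^sub>R v)) has_derivative (frechet_derivative F (at q) \<circ> (\<lambda>t. t *\<^sub>R v))) (at s)"
    by (rule diff_chain_at[OF dl]) (use dF in \<open>simp add: q_def\<close>)
  moreover have "linear (frechet_derivative F (at q))"
    using dF has_derivative_linear by blast
  then have "(frechet_derivative F (at q) \<circ> (\<lambda>t. t *\<^sub>R v)) = (\<lambda>t. t *\<^sub>R frechet_derivative F (at q) v)"
    by (auto simp: o_def linear_scale)
  ultimately show ?thesis
    unfolding has_vector_derivative_def by (simp add: F_def q_def ddir_def o_def)
qed

lemma smooth_chain:
  fixes g :: "'a::real_normed_vector \<Rightarrow> complex"
  assumes "smooth g"
  shows "chain (\<lambda>k s. iter_ddir (replicate k v) g (p + s *\<^sub>R v))"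
  unfolding chain_def using smooth_line_deriv[OF assms] by simp

lemma smooth_zero_open:
  fixes g :: "'a::real_normed_vector \<Rightarrow> 'b::real_normed_vector"
  assumes "smooth g" "open U" "\<And>y. y \<in> U \<Longrightarrow> g y = 0" "y \<in> U"
  shows "iter_ddir vs g y = 0"
  using assms(4)
proof (induction vs arbitrary: y)
  case Nil then show ?case using assms(3) by simp
next
  case (Cons v vs)
  have "(iter_ddir vs g has_derivative (\<lambda>_. 0)) (at y)"
    by (rule has_derivative_transform_within_open[of "\<lambda>_. 0" "\<lambda>_. 0" y UNIV U])
       (use Cons assms(2) in auto)
  then have "frechet_derivative (iter_ddir vs g) (at y) = (\<lambda>_. 0)"
    by (simp add: frechet_derivative_at[symmetric])
  then show ?case by (simp add: ddir_def)
qed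



lemma nn_integral_cmult_le:
  assumes "c < top"
  shows "(\<integral>\<^sup>+ x. c * f x \<partial>M) \<le> c * integral\<^sup>N M f"
proof (cases "c = 0")
  case True then show ?thesis by simp
next
  case False
  show ?thesis
    unfolding nn_integral_def[of M "\<lambda>x. c * f x"]
  proof (rule SUP_least, clarify)
    fix s assume s: "simple_function M s" "s \<le> (\<lambda>x. c * f x)"
    define s' where "s' = (\<lambda>x. s x / c)"
    have s'sf: "simple_function M s'" unfolding s'_def by (rule simple_function_compose1[OF s(1)])
    have eq: "s x = c * s' x" for x
      unfolding s'_def using False assms
      by (simp add: ennreal_times_divide) (metis ennreal_mult_divide_eq mult.commute top.not_eq_extremum)
    have "s' \<le> f"
    proof (rule le_funI)
      fix x
      have "c * s' x \<le> c * f x" using s(2) eq[of x] by (metis le_fun_def)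
      then show "s' x \<le> f x" using False assms
        by (metis ennreal_mult_le_mult_iff top.not_eq_extremum)
    qed
    have "integral\<^sup>S M s = c * integral\<^sup>S M s'"
      by (subst simple_integral_mult[OF s'sf, symmetric]) (simp add: eq[abs_def])
    also have "integral\<^sup>S M s' = integral\<^sup>N M s'" by (simp add: nn_integral_eq_simple_integral[OF s'sf])
    also have "\<dots> \<le> integral\<^sup>N M f" by (rule nn_integral_mono) (use \<open>s' \<le> f\<close> in \<open>auto simp: le_fun_def\<close>)
    finally show "integral\<^sup>S M s \<le> c * integral\<^sup>N M f"
      by (metis mult_left_mono zero_le)
  qed
qed

lemma dyadic_pointwise:
  fixes z :: "'a::real_normed_vector"
  shows "ennreal (1 / (1 + norm z)^N) \<le> (\<Sum>j. ennreal (2^N / 2^(j*N)) * indicator (ball 0 (2^j)) z)"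
proof -
  have ex: "\<exists>j. norm z < (2::real)^j" using real_arch_pow[of 2 "norm z"] by auto
  define j where "j = (LEAST j. norm z < (2::real)^j)"
  have j1: "norm z < 2^j" unfolding j_def by (rule LeastI_ex[OF ex])
  have j2: "(2::real)^j \<le> 2 * (1 + norm z)"
  proof (cases j)
    case 0 then show ?thesis by simp
  next
    case (Suc i)
    then have "\<not> norm z < 2^i" unfolding j_def using not_less_Least[of i] by (metis j_def lessI)
    then show ?thesis using Suc by simp
  qed
  have "1 / (1 + norm z)^N \<le> 2^N / 2^(j*N)"
  proof -
    have "((2::real)^j)^N \<le> (2 * (1 + norm z))^N" by (rule power_mono[OF j2]) simp
    moreover have "(2::real)^(j*N) = (2^j)^N" by (simp add: power_mult)
    moreover have "(2 * (1 + norm z))^N = (2::real)^N * (1+norm z)^N" by (simp only: power_mult_distrib)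
    ultimately have *: "(2::real)^(j*N) \<le> 2^N * (1+norm z)^N" by simp
    have p: "(1+norm z)^N > 0" "(2::real)^(j*N) > 0" by (auto intro!: zero_less_power add_pos_nonneg)
    show ?thesis using * p by (simp add: divide_simps mult.commute)
  qed
  then have "ennreal (1 / (1 + norm z)^N) \<le> ennreal (2^N / 2^(j*N)) * indicator (ball 0 (2^j)) z"
    using j1 by (simp add: ennreal_leI)
  also have "\<dots> \<le> (\<Sum>j. ennreal (2^N / 2^(j*N)) * indicator (ball 0 (2^j)) z)"
  proof -
    define F where "F = (\<lambda>j. ennreal (2^N / 2^(j*N)) * (indicator (ball 0 (2^j)) z :: ennreal))"
    have "sum F {j} \<le> suminf F" by (rule sum_le_suminf) auto
    then have "F j \<le> suminf F" by simp
    then show ?thesis by (simp only: F_def)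
  qed
  finally show ?thesis .
qed

lemma weight_bound:
  fixes g :: "real^'n::finite \<Rightarrow> ennreal" and y :: "real^'n"
  assumes [measurable]: "g \<in> borel_measurable lborel"
    and A: "\<And>r. 1 \<le> r \<Longrightarrow> (\<integral>\<^sup>+x. g x * indicator (ball y r) x \<partial>lborel) \<le> A * emeasure lborel (ball y r)"
  shows "(\<integral>\<^sup>+x. g x * ennreal (1 / (1 + norm (x - y))^(CARD('n)+1)) \<partial>lborel)
     \<le> ennreal (unit_ball_vol (CARD('n)) * 2^(CARD('n)+2)) * A"
proof -
  let ?d = "CARD('n)"
  let ?N = "CARD('n)+1"
  have gb[measurable]: "g \<in> borel_measurable borel" using assms(1) by simp
  have [measurable]: "ball y r \<in> sets borel" for r by simp
  define c where "c = (\<lambda>j::nat. ennreal (2^?N / 2^(j*?N)))"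
  have ind: "indicator (ball 0 (2^j)) (x - y) = (indicator (ball y (2^j)) x :: ennreal)" for x j
    by (simp add: indicator_def dist_norm norm_minus_commute)
  have "(\<integral>\<^sup>+x. g x * ennreal (1 / (1 + norm (x - y))^?N) \<partial>lborel)
      \<le> (\<integral>\<^sup>+x. (\<Sum>j. c j * (g x * indicator (ball y (2^j)) x)) \<partial>lborel)"
  proof (rule nn_integral_mono)
    fix x
    have "g x * ennreal (1 / (1 + norm (x - y))^?N) \<le> g x * (\<Sum>j. c j * indicator (ball y (2^j)) x)"
      using dyadic_pointwise[where N="?N" and z="x - y"] unfolding c_def ind by (intro mult_left_mono) auto
    also have "\<dots> = (\<Sum>j. c j * (g x * indicator (ball y (2^j)) x))"
      by (simp add: ennreal_suminf_cmult[symmetric] mult_ac)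
    finally show "g x * ennreal (1 / (1 + norm (x - y))^?N) \<le> (\<Sum>j. c j * (g x * indicator (ball y (2^j)) x))" .
  qed
  also have "\<dots> = (\<Sum>j. \<integral>\<^sup>+x. c j * (g x * indicator (ball y (2^j)) x) \<partial>lborel)"
  proof (rule nn_integral_suminf)
    fix j
    show "(\<lambda>x. c j * (g x * indicator (ball y (2 ^ j)) x)) \<in> borel_measurable lborel" by measurable
  qed
  also have "\<dots> = (\<Sum>j. c j * \<integral>\<^sup>+x. g x * indicator (ball y (2^j)) x \<partial>lborel)"
    by (subst nn_integral_cmult) auto
  also have "\<dots> \<le> (\<Sum>j. c j * (A * ennreal (unit_ball_vol ?d * (2^j)^?d)))"
  proof (intro suminf_le allI mult_left_mono)
    fix j :: nat
    show "(\<integral>\<^sup>+x. g x * indicator (ball y (2^j)) x \<partial>lborel) \<le> A * ennreal (unit_ball_vol ?d * (2^j)^?d)"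
      using A[of "2^j"] emeasure_ball[of "2^j" y] by simp
  qed auto
  also have "\<dots> = A * (\<Sum>j. ennreal (unit_ball_vol ?d * 2^?N * (1/2)^j))"
  proof -
    have "c j * (A * ennreal (unit_ball_vol ?d * (2^j)^?d)) = A * ennreal (unit_ball_vol ?d * 2^?N * (1/2)^j)" for j
    proof -
      have "(2::real)^?N / 2^(j*?N) * (unit_ball_vol ?d * (2^j)^?d) = unit_ball_vol ?d * 2^?N * (1/2)^j"
        by (simp add: field_simps power_mult[symmetric] power_add[symmetric] algebra_simps)
      moreover have "unit_ball_vol ?d \<ge> 0" by (simp add: unit_ball_vol_def)
      ultimately show ?thesis unfolding c_def
        by (simp add: ennreal_mult[symmetric] mult_ac)
    qed
    then show ?thesis by simp
  qed
  also have "(\<Sum>j. ennreal (unit_ball_vol ?d * 2^?N * (1/2)^j)) = ennreal (\<Sum>j. unit_ball_vol ?d * 2^?N * (1/2)^j)"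
    by (rule suminf_ennreal2) (auto simp: unit_ball_vol_def intro!: summable_mult summable_geometric)
  also have "(\<Sum>j. unit_ball_vol ?d * 2^?N * (1/2::real)^j) = unit_ball_vol ?d * 2^(?d+2)"
    by (subst suminf_mult) (auto simp: suminf_geometric)
  finally show ?thesis by (simp add: mult.commute)
qed



lemma smooth_bounded_outside:
  fixes g :: "real^'n::finite \<Rightarrow> complex"
  assumes "smooth g" "\<And>\<xi>. 2 < norm \<xi> \<Longrightarrow> g \<xi> = 0"
  shows "\<exists>B\<ge>0. \<forall>p. norm (iter_ddir vs g p) \<le> B"
proof -
  have "compact (iter_ddir vs g ` cball 0 2)"
    by (rule compact_continuous_image) (use smooth_cont[OF assms(1)] in \<open>auto intro: continuous_on_subset\<close>)
  then obtain B where B: "\<And>y. y \<in> iter_ddir vs g ` cball 0 2 \<Longrightarrow> norm y \<le> B"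
    using compact_imp_bounded bounded_iff by metis
  have z: "iter_ddir vs g p = 0" if "2 < norm p" for p
    by (rule smooth_zero_open[OF assms(1), of "{p. 2 < norm p}"])
       (use assms(2) that in \<open>auto intro: open_Collect_less continuous_intros\<close>)
  show ?thesis
  proof (intro exI[of _ "max B 0"] conjI allI)
    fix p
    show "norm (iter_ddir vs g p) \<le> max B 0"
    proof (cases "norm p \<le> 2")
      case True then show ?thesis using B[of "iter_ddir vs g p"] by auto
    next
      case False then show ?thesis using z[of p] by auto
    qed
  qed simp
qed

lemma powr_le_3:
  assumes "norm (\<xi>::'a::real_normed_vector) \<le> 2"
  shows "(1 + norm \<xi>) powr e \<le> 3 powr \<bar>e\<bar>"
proof (cases "e \<ge> 0")
  case True
  then have "(1 + norm \<xi>) powr e \<le> 3 powr e" using assms by (intro powr_mono2) auto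
  then show ?thesis using True by simp
next
  case False
  then have "(1 + norm \<xi>) powr e \<le> (1 + norm \<xi>) powr 0" by (intro powr_mono) auto
  also have "\<dots> = 1"
  proof -
    have "1 + norm \<xi> \<noteq> 0" by (smt (verit) norm_ge_zero)
    then show ?thesis by simp
  qed
  also have "1 \<le> (3::real) powr \<bar>e\<bar>" by (rule ge_one_powr_ge_zero) auto
  finally show ?thesis .
qed

lemma hoer_bound:
  fixes a :: "(real^'n::finite) \<times> (real^'n) \<Rightarrow> complex"
  assumes "hoermander m \<rho> \<delta> a"
  shows "\<exists>B\<ge>0. \<forall>x \<xi>. norm \<xi> \<le> 2 \<longrightarrow> norm (iter_ddir (replicate j (xidir i)) a (x, \<xi>)) \<le> B"
proof -
  obtain C where C: "\<And>x \<xi>. norm (iter_ddir (map xdir [] @ map xidir (replicate j i)) a (x, \<xi>))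
          \<le> C * (1 + norm \<xi>) powr (m - \<rho> * real (length (replicate j i)) + \<delta> * real (length ([]::'n list)))"
    using assms unfolding hoermander_def by blast
  define e where "e = m - \<rho> * real j"
  have C': "norm (iter_ddir (replicate j (xidir i)) a (x, \<xi>)) \<le> C * (1 + norm \<xi>) powr e" for x \<xi>
    using C[of x \<xi>] by (simp add: map_replicate e_def)
  show ?thesis
  proof (intro exI[of _ "max C 0 * 3 powr \<bar>e\<bar>"] conjI allI impI)
    fix x \<xi> assume "norm (\<xi>::real^'n) \<le> 2"
    then have "(1 + norm \<xi>) powr e \<le> 3 powr \<bar>e\<bar>" by (rule powr_le_3)
    moreover have "C * (1 + norm \<xi>) powr e \<le> max C 0 * (1 + norm \<xi>) powr e"
      by (intro mult_right_mono) auto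
    ultimately have "C * (1 + norm \<xi>) powr e \<le> max C 0 * 3 powr \<bar>e\<bar>"
      by (meson max.cobounded2 mult_left_mono order_trans)
    then show "norm (iter_ddir (replicate j (xidir i)) a (x, \<xi>)) \<le> max C 0 * 3 powr \<bar>e\<bar>"
      using C'[of x \<xi>] by linarith
  qed simp
qed

lemma integrable_cs:
  fixes g :: "real^'n::finite \<Rightarrow> complex"
  assumes "continuous_on UNIV g" "\<And>\<xi>. R < norm \<xi> \<Longrightarrow> g \<xi> = 0"
  shows "integrable lborel g"
proof -
  have "integrable lborel (\<lambda>\<xi>. indicator (cball 0 R) \<xi> *\<^sub>R g \<xi>)"
    by (rule borel_integrable_compact) (use assms(1) in \<open>auto intro: continuous_on_subset\<close>)
  moreover have "indicator (cball 0 R) \<xi> *\<^sub>R g \<xi> = g \<xi>" for \<xi>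
    using assms(2)[of \<xi>] by (auto simp: indicator_def)
  ultimately show ?thesis by simp
qed

lemma norm_int_cball_bound:
  fixes g :: "real^'n::finite \<Rightarrow> complex"
  assumes "integrable lborel g" "\<And>\<xi>. norm (g \<xi>) \<le> indicator (cball 0 R) \<xi> * B" "B \<ge> 0" "R \<ge> 0"
  shows "norm (\<integral>\<xi>. g \<xi> \<partial>lborel) \<le> B * (unit_ball_vol (CARD('n)) * R^CARD('n))"
proof -
  have "ennreal (norm (\<integral>\<xi>. g \<xi> \<partial>lborel)) \<le> (\<integral>\<^sup>+\<xi>. norm (g \<xi>) \<partial>lborel)"
    by (rule integral_norm_bound_ennreal[OF assms(1)])
  also have "\<dots> \<le> (\<integral>\<^sup>+\<xi>. ennreal B * indicator (cball (0::real^'n) R) \<xi> \<partial>lborel)"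
  proof (rule nn_integral_mono)
    fix \<xi> :: "real^'n"
    show "ennreal (norm (g \<xi>)) \<le> ennreal B * indicator (cball 0 R) \<xi>"
    proof (cases "\<xi> \<in> cball 0 R")
      case True then show ?thesis using assms(2)[of \<xi>] by (simp add: ennreal_leI)
    next
      case False then have "norm (g \<xi>) \<le> 0" using assms(2)[of \<xi>] by simp
      then show ?thesis by simp
    qed
  qed
  also have "\<dots> = ennreal B * emeasure lborel (cball (0::real^'n) R)"
    by (rule nn_integral_cmult_indicator) simp
  also have "\<dots> = ennreal (B * (unit_ball_vol (CARD('n)) * R^CARD('n)))"
  proof -
    have X: "unit_ball_vol (CARD('n)) * R^CARD('n) \<ge> 0" using assms(4) by (simp add: unit_ball_vol_def)
    show ?thesis using emeasure_cball[OF assms(4), of "0::real^'n"] assms(3) X by (simp add: ennreal_mult)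
  qed
  finally show ?thesis
    using assms(3,4) by (subst (asm) ennreal_le_iff) (auto simp: unit_ball_vol_def)
qed

context
  fixes a :: "(real^'n::finite) \<times> (real^'n) \<Rightarrow> complex" and \<eta> :: "real^'n \<Rightarrow> complex"
    and m \<rho> \<delta> :: real
  assumes H: "hoermander m \<rho> \<delta> a" and S: "smooth \<eta>" and Z: "\<And>\<xi>. 2 < norm \<xi> \<Longrightarrow> \<eta> \<xi> = 0"
begin

definition AA :: "real^'n \<Rightarrow> real^'n \<Rightarrow> 'n \<Rightarrow> nat \<Rightarrow> real \<Rightarrow> complex" where
  "AA x \<xi> i = (\<lambda>j s. iter_ddir (replicate j (xidir i)) a ((x, \<xi>) + s *\<^sub>R xidir i))"

definition EE :: "real^'n \<Rightarrow> 'n \<Rightarrow> nat \<Rightarrow> real \<Rightarrow> complex" where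
  "EE \<xi> i = (\<lambda>j s. iter_ddir (replicate j (axis i 1)) \<eta> (\<xi> + s *\<^sub>R axis i 1))"

lemma smooth_a: "smooth a" using H unfolding hoermander_def by simp

lemma chain_PP: fixes x \<xi> :: "real^'n" shows "chain (leib (AA x \<xi> i) (EE \<xi> i))"
  unfolding AA_def EE_def by (intro chain_leib smooth_chain smooth_a S)

lemma PP0: fixes x \<xi> :: "real^'n" shows "leib (AA x \<xi> i) (EE \<xi> i) 0 = (\<lambda>s. a (x, \<xi> + s *\<^sub>R axis i 1) * \<eta> (\<xi> + s *\<^sub>R axis i 1))"
  by (rule ext) (simp add: leib_def AA_def EE_def xidir_def)

lemma PP_bound: "\<exists>M\<ge>0. \<forall>(x::real^'n) (\<xi>::real^'n) (i::'n) (s::real). norm (leib (AA x \<xi> i) (EE \<xi> i) k s) \<le> M"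
proof -
  have "\<forall>j i. \<exists>B\<ge>0. \<forall>x \<xi>. norm \<xi> \<le> 2 \<longrightarrow> norm (iter_ddir (replicate j (xidir i)) a (x, \<xi>)) \<le> B"
    using hoer_bound[OF H] by blast
  then obtain Ab where Ab: "\<And>j i. Ab j i \<ge> 0"
    "\<And>j i x \<xi>. norm \<xi> \<le> 2 \<Longrightarrow> norm (iter_ddir (replicate j (xidir i)) a (x, \<xi>)) \<le> Ab j i"
    by metis
  have "\<forall>j i. \<exists>B\<ge>0. \<forall>p. norm (iter_ddir (replicate j (axis i 1)) \<eta> p) \<le> B"
    using smooth_bounded_outside[OF S Z] by blast
  then obtain Eb where Eb: "\<And>j i. Eb j i \<ge> 0"
    "\<And>j i p. norm (iter_ddir (replicate j (axis i 1)) \<eta> p) \<le> Eb j i"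
    by metis
  have Ez: "iter_ddir vs \<eta> p = 0" if "2 < norm p" for vs p
    by (rule smooth_zero_open[OF S, of "{p. 2 < norm p}"])
       (use Z that in \<open>auto intro: open_Collect_less continuous_intros\<close>)
  define M where "M = (\<Sum>i\<in>UNIV. \<Sum>j\<le>k. real (k choose j) * Ab j i * Eb (k - j) i)"
  have Mi: "(\<Sum>j\<le>k. real (k choose j) * Ab j i * Eb (k - j) i) \<le> M" for i
    unfolding M_def
    by (rule member_le_sum[where f="\<lambda>i. \<Sum>j\<le>k. real (k choose j) * Ab j i * Eb (k - j) i"])
       (auto intro!: sum_nonneg mult_nonneg_nonneg Ab Eb)
  show ?thesis
  proof (intro exI[of _ M] conjI allI)
    show "M \<ge> 0" unfolding M_def by (auto intro!: sum_nonneg mult_nonneg_nonneg Ab Eb)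
    fix x \<xi> :: "real^'n" and i :: 'n and s :: real
    let ?q = "\<xi> + s *\<^sub>R axis i 1"
    show "norm (leib (AA x \<xi> i) (EE \<xi> i) k s) \<le> M"
    proof (cases "norm ?q \<le> 2")
      case True
      have "norm (leib (AA x \<xi> i) (EE \<xi> i) k s) \<le> (\<Sum>j\<le>k. norm (of_nat (k choose j) * AA x \<xi> i j s * EE \<xi> i (k - j) s))"
        unfolding leib_def by (rule norm_sum)
      also have "\<dots> \<le> (\<Sum>j\<le>k. real (k choose j) * Ab j i * Eb (k - j) i)"
      proof (rule sum_mono)
        fix j
        have "norm (AA x \<xi> i j s) \<le> Ab j i"
          unfolding AA_def using Ab(2)[OF True, of j i x] by (simp add: xidir_def)
        moreover have "norm (EE \<xi> i (k - j) s) \<le> Eb (k - j) i" unfolding EE_def by (rule Eb(2))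
        ultimately show "norm (of_nat (k choose j) * AA x \<xi> i j s * EE \<xi> i (k - j) s) \<le> real (k choose j) * Ab j i * Eb (k - j) i"
          by (simp add: norm_mult mult.assoc) (intro mult_left_mono mult_mono, auto simp: Ab(1))
      qed
      also have "\<dots> \<le> M" by (rule Mi)
      finally show ?thesis .
    next
      case False
      then have "leib (AA x \<xi> i) (EE \<xi> i) k s = 0"
        unfolding leib_def EE_def using Ez[of ?q] by simp
      then show ?thesis using \<open>M \<ge> 0\<close> by simp
    qed
  qed
qed


lemma cont_a: "continuous_on UNIV a"
  using smooth_cont[OF smooth_a, of "[]"] by simp

lemma cont_eta: "continuous_on UNIV \<eta>"
  using smooth_cont[OF S, of "[]"] by simp

definition FF :: "real^'n \<Rightarrow> real^'n \<Rightarrow> 'n \<Rightarrow> real \<Rightarrow> complex" where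
  "FF x \<xi> i = (\<lambda>s. a (x, \<xi> + s *\<^sub>R axis i 1) * \<eta> (\<xi> + s *\<^sub>R axis i 1))"

definition KK :: "real^'n \<Rightarrow> real^'n \<Rightarrow> complex" where
  "KK x z = (\<integral>\<xi>. cis (z \<bullet> \<xi>) * (a (x, \<xi>) * \<eta> \<xi>) \<partial>lborel)"

lemma cont_b_shift: "continuous_on UNIV (\<lambda>\<xi>::real^'n. a (x, \<xi> + c) * \<eta> (\<xi> + c))"
proof -
  have "continuous_on UNIV (\<lambda>\<xi>::real^'n. a (x, \<xi> + c))"
    by (rule continuous_on_compose2[OF cont_a]) (auto intro!: continuous_intros)
  moreover have "continuous_on UNIV (\<lambda>\<xi>::real^'n. \<eta> (\<xi> + c))"
    by (rule continuous_on_compose2[OF cont_eta]) (auto intro!: continuous_intros)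
  ultimately show ?thesis by (intro continuous_intros)
qed

lemma Dh_cont: "continuous_on UNIV (\<lambda>\<xi>. Dh h n (FF x \<xi> i) t)"
proof (induction n arbitrary: t)
  case 0 then show ?case unfolding FF_def using cont_b_shift by simp
next
  case (Suc n) then show ?case by (auto intro!: continuous_intros)
qed

lemma Dh_supp:
  assumes "2 + \<bar>t\<bar> + real n * \<bar>h\<bar> < norm \<xi>"
  shows "Dh h n (FF x \<xi> i) t = 0"
proof (rule Dh_zero)
  fix s assume s: "\<bar>s - t\<bar> \<le> real n * \<bar>h\<bar>"
  have "norm \<xi> \<le> norm (\<xi> + s *\<^sub>R axis i 1) + norm (s *\<^sub>R (axis i 1 :: real^'n))"
    using norm_triangle_ineq[of "\<xi> + s *\<^sub>R axis i 1" "-(s *\<^sub>R axis i 1)"] by simp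
  then have "2 < norm (\<xi> + s *\<^sub>R axis i 1)" using s assms by auto
  then show "FF x \<xi> i s = 0" unfolding FF_def using Z by simp
qed

lemma Dh_int: "integrable lborel (\<lambda>\<xi>. cis (z \<bullet> \<xi>) * Dh h n (FF x \<xi> i) t)"
proof (rule integrable_cs[where R="2 + \<bar>t\<bar> + real n * \<bar>h\<bar>"])
  show "continuous_on UNIV (\<lambda>\<xi>. cis (z \<bullet> \<xi>) * Dh h n (FF x \<xi> i) t)"
    using Dh_cont by (auto intro!: continuous_intros)
qed (use Dh_supp in auto)

lemma shift_base: "(\<integral>\<xi>. cis (z \<bullet> \<xi>) * FF x \<xi> i t \<partial>lborel) = cis (- (t * z$i)) * KK x z"
proof -
  define c where "c = t *\<^sub>R (axis i 1 :: real^'n)"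
  define g where "g = (\<lambda>\<zeta>. cis (z \<bullet> (\<zeta> - c)) * (a (x, \<zeta>) * \<eta> \<zeta>))"
  have gm: "g \<in> borel_measurable borel"
    unfolding g_def using cont_b_shift[of x 0]
    by (intro borel_measurable_continuous_onI) (auto intro!: continuous_intros)
  have "(\<integral>\<zeta>. g \<zeta> \<partial>lborel) = (\<integral>\<zeta>. g \<zeta> \<partial>(distr lborel borel ((+) c)))"
    by (simp add: lborel_distr_plus)
  also have "\<dots> = (\<integral>\<xi>. g (c + \<xi>) \<partial>lborel)"
    by (rule integral_distr) (auto simp: gm)
  also have "\<dots> = (\<integral>\<xi>. cis (z \<bullet> \<xi>) * FF x \<xi> i t \<partial>lborel)"
    unfolding g_def FF_def c_def by (simp add: add.commute)
  finally have 1: "(\<integral>\<xi>. cis (z \<bullet> \<xi>) * FF x \<xi> i t \<partial>lborel) = (\<integral>\<zeta>. g \<zeta> \<partial>lborel)" ..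
  have "g \<zeta> = cis (- (t * z$i)) * (cis (z \<bullet> \<zeta>) * (a (x, \<zeta>) * \<eta> \<zeta>))" for \<zeta>
    unfolding g_def c_def by (simp add: inner_diff_right cis_mult inner_axis)
  then have "(\<integral>\<zeta>. g \<zeta> \<partial>lborel) = cis (- (t * z$i)) * KK x z"
    unfolding KK_def by simp
  with 1 show ?thesis by simp
qed

lemma Dh_identity:
  assumes "z$i \<noteq> 0" "h = pi / z$i"
  shows "(\<integral>\<xi>. cis (z \<bullet> \<xi>) * Dh h n (FF x \<xi> i) t \<partial>lborel) = (-2)^n * cis (- (t * z$i)) * KK x z"
proof (induction n arbitrary: t)
  case 0 then show ?case using shift_base by simp
next
  case (Suc n)
  have "(\<integral>\<xi>. cis (z \<bullet> \<xi>) * Dh h (Suc n) (FF x \<xi> i) t \<partial>lborel)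
      = (\<integral>\<xi>. cis (z \<bullet> \<xi>) * Dh h n (FF x \<xi> i) (t + h) - cis (z \<bullet> \<xi>) * Dh h n (FF x \<xi> i) t \<partial>lborel)"
    by (simp add: algebra_simps)
  also have "\<dots> = (\<integral>\<xi>. cis (z \<bullet> \<xi>) * Dh h n (FF x \<xi> i) (t + h) \<partial>lborel) - (\<integral>\<xi>. cis (z \<bullet> \<xi>) * Dh h n (FF x \<xi> i) t \<partial>lborel)"
    by (rule Bochner_Integration.integral_diff[OF Dh_int Dh_int])
  also have "\<dots> = (-2)^n * cis (- ((t + h) * z$i)) * KK x z - (-2)^n * cis (- (t * z$i)) * KK x z"
    using Suc.IH by simp
  also have "cis (- ((t + h) * z$i)) = - cis (- (t * z$i))"
  proof -
    have "h * z$i = pi" using assms by simp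
    then have "- ((t + h) * z$i) = - (t * z$i) + (- pi)" by (simp add: algebra_simps)
    then have "cis (- ((t + h) * z$i)) = cis (- (t * z$i)) * cis (- pi)" by (simp only: cis_mult)
    moreover have "cis (- pi) = -1" by (simp add: complex_eq_iff)
    ultimately show ?thesis by simp
  qed
  finally show ?case by (simp add: algebra_simps)
qed


lemma b_int: "integrable lborel (\<lambda>\<xi>. cis (z \<bullet> \<xi>) * (a (x, \<xi>) * \<eta> \<xi>))"
  using Dh_int[of z h 0 x i 0] by (simp add: FF_def)

lemma KK_decay: "\<exists>CK\<ge>0. \<forall>x z. norm (KK x z) \<le> CK / (1 + norm z)^(CARD('n)+1)"
proof -
  define d where "d = CARD('n)"
  define N where "N = d + 1"
  obtain M0 where M0: "M0 \<ge> 0" "\<And>x \<xi> i s. norm (leib (AA x \<xi> i) (EE \<xi> i) 0 s) \<le> M0"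
    using PP_bound[of 0] by blast
  obtain MN where MN: "MN \<ge> 0" "\<And>x \<xi> i s. norm (leib (AA x \<xi> i) (EE \<xi> i) N s) \<le> MN"
    using PP_bound[of N] by blast
  define V2 where "V2 = unit_ball_vol d * 2^d"
  define VR where "VR = unit_ball_vol d * (2 + N * pi)^d"
  have V: "V2 \<ge> 0" "VR \<ge> 0" unfolding V2_def VR_def by (auto simp: unit_ball_vol_def)
  have d1: "d \<ge> 1" unfolding d_def by (simp add: Suc_leI)
  have bM: "norm (a (x, \<xi>) * \<eta> \<xi>) \<le> M0" for x \<xi>
    using M0(2)[of x \<xi> undefined 0] by (simp add: PP0)
  have small: "norm (KK x z) \<le> M0 * V2" for x z
    unfolding KK_def V2_def d_def
  proof (rule norm_int_cball_bound[OF b_int _ M0(1)])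
    fix \<xi> :: "real^'n"
    show "norm (cis (z \<bullet> \<xi>) * (a (x, \<xi>) * \<eta> \<xi>)) \<le> indicator (cball 0 2) \<xi> * M0"
      using bM[of x \<xi>] Z[of \<xi>] by (auto simp: indicator_def norm_mult)
  qed simp
  have large: "norm (KK x z) * (1 + norm z)^N \<le> (3 * pi * d)^N * MN * VR" if zd: "norm z \<ge> d" for x z
  proof -
    have "\<exists>i. norm z / d \<le> \<bar>z$i\<bar>"
    proof (rule ccontr)
      assume "\<not> ?thesis"
      then have "\<bar>z$i\<bar> < norm z / d" for i by (meson not_le)
      then have "(\<Sum>i\<in>UNIV. \<bar>z$i\<bar>) < (\<Sum>i\<in>(UNIV::'n set). norm z / d)"
        by (intro sum_strict_mono) auto
      also have "\<dots> = norm z" using d1 by (simp add: d_def)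
      finally show False using norm_le_l1_cart[of z] by simp
    qed
    then obtain i where i: "norm z / d \<le> \<bar>z$i\<bar>" by blast
    have nz: "norm z \<le> d * \<bar>z$i\<bar>" using i d1 by (simp add: field_simps)
    have zi: "z$i \<noteq> 0"
    proof
      assume "z$i = 0"
      then have "norm z \<le> 0" using nz by simp
      then show False using zd d1 by simp
    qed
    define h where "h = pi / z$i"
    have hz: "\<bar>h\<bar> * \<bar>z$i\<bar> = pi" unfolding h_def using zi by (simp add: abs_divide)
    have h1: "\<bar>z$i\<bar> \<ge> 1"
    proof -
      have "real d * 1 \<le> real d * \<bar>z$i\<bar>" using nz zd by simp
      then show ?thesis using d1 by (simp add: mult_le_cancel_left_pos)
    qed
    have hpi: "\<bar>h\<bar> \<le> pi" unfolding h_def using h1 by (simp add: abs_divide divide_le_eq)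
    have hzb: "\<bar>h\<bar> * (1 + norm z) \<le> 2 * pi * d"
    proof -
      have "1 + norm z \<le> 2 * (d * \<bar>z$i\<bar>)" using nz zd d1 by linarith
      then have "\<bar>h\<bar> * (1 + norm z) \<le> \<bar>h\<bar> * (2 * (d * \<bar>z$i\<bar>))" by (simp add: mult_left_mono)
      also have "\<dots> = 2 * d * (\<bar>h\<bar> * \<bar>z$i\<bar>)" by (simp add: algebra_simps)
      finally show ?thesis using hz by (simp add: algebra_simps)
    qed
    have ident: "(\<integral>\<xi>. cis (z \<bullet> \<xi>) * Dh h N (FF x \<xi> i) 0 \<partial>lborel) = (-2)^N * KK x z"
      using Dh_identity[OF zi h_def, where n=N and t=0 and x=x] by simp
    have FFe: "FF x \<xi> i = leib (AA x \<xi> i) (EE \<xi> i) 0" for \<xi> by (simp add: PP0 FF_def)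
    have pw: "norm (cis (z \<bullet> \<xi>) * Dh h N (FF x \<xi> i) 0) \<le> indicator (cball 0 (2 + N * pi)) \<xi> * ((3 * \<bar>h\<bar>)^N * MN)"
      for \<xi> :: "real^'n"
    proof (cases "norm \<xi> \<le> 2 + N * pi")
      case True
      have "norm (Dh h N (FF x \<xi> i) 0) \<le> (3 * \<bar>h\<bar>)^N * MN"
        unfolding FFe by (rule Dh_bound[OF chain_PP MN(2)])
      then show ?thesis using True by (simp add: norm_mult)
    next
      case False
      have "2 + \<bar>0\<bar> + real N * \<bar>h\<bar> \<le> 2 + N * pi" using hpi by (simp add: mult_left_mono)
      then have "Dh h N (FF x \<xi> i) 0 = 0" using False by (intro Dh_supp) simp
      then show ?thesis using False by simp
    qed
    have "norm ((-2)^N * KK x z) \<le> ((3 * \<bar>h\<bar>)^N * MN) * VR"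
      unfolding ident[symmetric] VR_def d_def
      by (rule norm_int_cball_bound[OF Dh_int pw]) (use MN(1) in \<open>auto intro: add_nonneg_nonneg\<close>)
    then have A: "2^N * norm (KK x z) \<le> (3 * \<bar>h\<bar>)^N * MN * VR" by (simp add: norm_mult norm_power)
    have "2^N * (norm (KK x z) * (1 + norm z)^N) = (2^N * norm (KK x z)) * (1 + norm z)^N" by simp
    also have "\<dots> \<le> ((3 * \<bar>h\<bar>)^N * MN * VR) * (1 + norm z)^N"
      using A by (rule mult_right_mono) simp
    also have "\<dots> = (3 * (\<bar>h\<bar> * (1 + norm z)))^N * MN * VR" by (simp add: power_mult_distrib)
    also have "\<dots> \<le> (3 * (2 * pi * d))^N * MN * VR"
    proof -
      have "3 * (\<bar>h\<bar> * (1 + norm z)) \<le> 3 * (2 * pi * d)" using hzb by simp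
      then have "(3 * (\<bar>h\<bar> * (1 + norm z)))^N \<le> (3 * (2 * pi * d))^N" by (rule power_mono) simp
      from mult_right_mono[OF mult_right_mono[OF this MN(1)] V(2)] show ?thesis .
    qed
    also have "(3 * (2 * pi * d)) = 2 * (3 * pi * d)" by simp
    also have "(2 * (3 * pi * d))^N = 2^N * (3 * pi * d)^N" by (rule power_mult_distrib)
    also have "2^N * (3 * pi * d)^N * MN * VR = 2^N * ((3 * pi * d)^N * MN * VR)" by (simp only: mult.assoc)
    finally show ?thesis by simp
  qed
  define CK where "CK = (3 * pi * d)^N * MN * VR + M0 * V2 * (1 + real d)^N"
  have T1: "(3 * pi * d)^N * MN * VR \<ge> 0" using MN(1) V by simp
  have T2: "M0 * V2 * (1 + real d)^N \<ge> 0" using M0(1) V by simp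
  show ?thesis
  proof (intro exI[of _ CK] conjI allI)
    show "CK \<ge> 0" unfolding CK_def using T1 T2 by linarith
    fix x z :: "real^'n"
    have pos: "(1 + norm z)^N > 0" by (simp add: add_pos_nonneg)
    have "norm (KK x z) * (1 + norm z)^N \<le> CK"
    proof (cases "norm z \<ge> d")
      case True
      then have "norm (KK x z) * (1 + norm z)^N \<le> (3 * pi * d)^N * MN * VR" by (rule large)
      then show ?thesis unfolding CK_def using T2 by linarith
    next
      case False
      have "(1 + norm z)^N \<le> (1 + real d)^N" using False by (intro power_mono) auto
      then have "norm (KK x z) * (1 + norm z)^N \<le> (M0 * V2) * (1 + real d)^N"
        using small[of x z] M0(1) V by (intro mult_mono) auto
      then show ?thesis unfolding CK_def using T1 by linarith
    qed
    then show "norm (KK x z) \<le> CK / (1 + norm z)^(CARD('n)+1)"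
      using pos unfolding N_def d_def by (simp add: pos_le_divide_eq)
  qed
qed

end



definition kern :: "real^'n::finite \<Rightarrow> real" where
  "kern z = 1 / (1 + norm z)^(CARD('n)+1)"

definition c0 :: "'n::finite itself \<Rightarrow> real" where
  "c0 _ = unit_ball_vol (CARD('n)) * 2^(CARD('n)+2)"

lemma one_plus_norm_ne: "1 + norm (z::'a::real_normed_vector) \<noteq> 0"
  by (smt (verit) norm_ge_zero)

lemma kern_nonneg: "kern z \<ge> 0" unfolding kern_def by simp

lemma kern_sym: "kern (x - y) = kern (y - x)" unfolding kern_def by (simp add: norm_minus_commute)

lemma kern_cont: "continuous_on UNIV (kern :: real^'n::finite \<Rightarrow> real)"
  unfolding kern_def
  by (intro continuous_intros) (auto simp: one_plus_norm_ne)

lemma kern_meas[measurable]: "(kern :: real^'n::finite \<Rightarrow> real) \<in> borel_measurable borel"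
  by (rule borel_measurable_continuous_onI[OF kern_cont])

lemma c0_nonneg: "c0 TYPE('n::finite) \<ge> 0" unfolding c0_def by (simp add: unit_ball_vol_def)

lemma kern_int: "(\<integral>\<^sup>+y. ennreal (kern (y - x)) \<partial>lborel) \<le> ennreal (c0 TYPE('n::finite))"
  for x :: "real^'n"
proof -
  have "(\<integral>\<^sup>+y. 1 * ennreal (1 / (1 + norm (y - x))^(CARD('n)+1)) \<partial>lborel)
      \<le> ennreal (unit_ball_vol (CARD('n)) * 2^(CARD('n)+2)) * 1"
    by (rule weight_bound) (auto simp: nn_integral_indicator)
  then show ?thesis by (simp add: kern_def c0_def)
qed

lemma schwartz_cont: "schwartz f \<Longrightarrow> continuous_on UNIV f"
  unfolding schwartz_def using smooth_cont[of f "[]"] by simp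

lemma schwartz_meas: "schwartz f \<Longrightarrow> f \<in> borel_measurable borel"
  by (rule borel_measurable_continuous_onI[OF schwartz_cont])

lemma schwartz_bound:
  fixes f :: "real^'n::finite \<Rightarrow> complex"
  assumes "schwartz f"
  shows "\<exists>Cf\<ge>0. \<forall>y. norm (f y) \<le> Cf * kern y"
proof -
  obtain C where C: "\<And>x. (1 + norm x)^(CARD('n)+1) * norm (iter_ddir (map (\<lambda>i. axis i 1) ([]::'n list)) f x) \<le> C"
    using assms unfolding schwartz_def by blast
  have C0: "C \<ge> 0" using C[of 0] by (smt (verit) mult_nonneg_nonneg norm_ge_zero zero_le_power)
  show ?thesis
  proof (intro exI[of _ C] conjI allI C0)
    fix y :: "real^'n"
    have p: "(1 + norm y)^(CARD('n)+1) > 0" by (simp add: add_pos_nonneg)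
    have "(1 + norm y)^(CARD('n)+1) * norm (f y) \<le> C" using C[of y] by simp
    then show "norm (f y) \<le> C * kern y" unfolding kern_def using p by (simp add: field_simps)
  qed
qed

lemma schwartz_int:
  fixes f :: "real^'n::finite \<Rightarrow> complex"
  assumes "schwartz f"
  shows "integrable lborel f"
proof -
  obtain Cf where Cf: "Cf \<ge> 0" "\<And>y. norm (f y) \<le> Cf * kern y" using schwartz_bound[OF assms] by blast
  have "(\<integral>\<^sup>+y. norm (f y) \<partial>lborel) \<le> (\<integral>\<^sup>+y. ennreal Cf * ennreal (kern ((y::real^'n) - 0)) \<partial>lborel)"
    by (rule nn_integral_mono) (use Cf in \<open>auto simp: ennreal_mult[symmetric] kern_nonneg intro!: ennreal_leI\<close>)
  also have "\<dots> = ennreal Cf * (\<integral>\<^sup>+y. ennreal (kern ((y::real^'n) - 0)) \<partial>lborel)"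
    by (rule nn_integral_cmult) simp
  also have "\<dots> \<le> ennreal Cf * ennreal (c0 TYPE('n))"
    by (intro mult_left_mono kern_int) simp
  also have "\<dots> < \<infinity>" by (simp add: ennreal_mult_less_top)
  finally show ?thesis
    using schwartz_meas[OF assms] by (intro integrableI_bounded) auto
qed

lemma A1star_ball:
  fixes w :: "real^'n::finite \<Rightarrow> real"
  assumes "r \<ge> 1"
  shows "(\<integral>\<^sup>+x. ennreal (w x) * indicator (ball y r) x \<partial>lborel) \<le> A1star w y * emeasure lborel (ball y r)"
proof -
  let ?I = "(\<integral>\<^sup>+x. ennreal (w x) * indicator (ball y r) x \<partial>lborel)"
  let ?\<mu> = "emeasure lborel (ball y r)"
  have mu: "?\<mu> \<noteq> 0" "?\<mu> \<noteq> \<infinity>"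
  proof -
    have "?\<mu> = ennreal (measure lborel (ball y r))"
      using emeasure_lborel_ball_finite[of y r] by (simp add: emeasure_eq_ennreal_measure)
    moreover have "measure lborel (ball y r) > 0" using assms content_ball_gt_0_iff[of y r] by simp
    ultimately show "?\<mu> \<noteq> 0" "?\<mu> \<noteq> \<infinity>" by auto
  qed
  have "?I / ?\<mu> \<le> A1star w y"
    unfolding A1star_def using assms by (intro SUP_upper2[of r]) auto
  then have "?I / ?\<mu> * ?\<mu> \<le> A1star w y * ?\<mu>" by (rule mult_right_mono) simp
  moreover have "?I / ?\<mu> * ?\<mu> = ?I"
    using mu by (simp add: ennreal_divide_times top.not_eq_extremum)
  ultimately show ?thesis by simp
qed


context
  fixes a :: "(real^'n::finite) \<times> (real^'n) \<Rightarrow> complex" and \<eta> :: "real^'n \<Rightarrow> complex"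
    and m \<rho> \<delta> :: real
  assumes H: "hoermander m \<rho> \<delta> a" and S: "smooth \<eta>" and Z: "\<And>\<xi>. 2 < norm \<xi> \<Longrightarrow> \<eta> \<xi> = 0"
begin

lemma kernel_bound: "\<exists>CK\<ge>0. \<forall>x z. norm (\<integral>\<xi>. cis (z \<bullet> \<xi>) * (a (x, \<xi>) * \<eta> \<xi>) \<partial>lborel) \<le> CK * kern z"
proof -
  obtain CK where "CK \<ge> 0" "\<And>x z. norm (KK a \<eta> x z) \<le> CK / (1 + norm z)^(CARD('n)+1)"
    using KK_decay[OF H S Z] by blast
  then show ?thesis by (intro exI[of _ CK]) (auto simp: KK_def[OF H S Z] kern_def)
qed

lemma cont_a': "continuous_on UNIV a"
  using smooth_cont[of a "[]"] H unfolding hoermander_def by simp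

lemma cont_eta': "continuous_on UNIV \<eta>"
  using smooth_cont[OF S, of "[]"] by simp

lemma pdo_repr:
  fixes f :: "real^'n \<Rightarrow> complex"
  assumes sf: "schwartz f"
  shows "integrable lborel (\<lambda>y. f y * (\<integral>\<xi>. cis ((x - y) \<bullet> \<xi>) * (a (x, \<xi>) * \<eta> \<xi>) \<partial>lborel))"
    and "pdo (\<lambda>(x, \<xi>). a (x, \<xi>) * \<eta> \<xi>) f x = (\<integral>y. f y * (\<integral>\<xi>. cis ((x - y) \<bullet> \<xi>) * (a (x, \<xi>) * \<eta> \<xi>) \<partial>lborel) \<partial>lborel)"
proof -
  define G where "G = (\<lambda>\<xi> y. cis (x \<bullet> \<xi>) * (a (x, \<xi>) * \<eta> \<xi>) * (cis (- (y \<bullet> \<xi>)) * f y))"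
  have fi: "integrable lborel f" by (rule schwartz_int[OF sf])
  have cf: "continuous_on UNIV f" by (rule schwartz_cont[OF sf])
  have contG: "continuous_on UNIV (\<lambda>p::(real^'n) \<times> (real^'n). G (fst p) (snd p))"
  proof -
    have c1: "continuous_on UNIV (\<lambda>p::(real^'n) \<times> (real^'n). a (x, fst p))"
      by (rule continuous_on_compose2[OF cont_a']) (auto intro!: continuous_intros)
    have c2: "continuous_on UNIV (\<lambda>p::(real^'n) \<times> (real^'n). \<eta> (fst p))"
      by (rule continuous_on_compose2[OF cont_eta']) (auto intro!: continuous_intros)
    have c3: "continuous_on UNIV (\<lambda>p::(real^'n) \<times> (real^'n). f (snd p))"
      by (rule continuous_on_compose2[OF cf]) (auto intro!: continuous_intros)
    show ?thesis unfolding G_def using c1 c2 c3 by (intro continuous_intros)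
  qed
  have measG: "(\<lambda>(\<xi>, y). G \<xi> y) \<in> borel_measurable (lborel \<Otimes>\<^sub>M lborel)"
  proof -
    have "(\<lambda>p::(real^'n) \<times> (real^'n). G (fst p) (snd p)) \<in> borel_measurable borel"
      by (rule borel_measurable_continuous_onI[OF contG])
    moreover have "(\<lambda>(\<xi>, y). G \<xi> y) = (\<lambda>p. G (fst p) (snd p))" by auto
    ultimately show ?thesis by (simp add: lborel_prod)
  qed
  have bi: "integrable lborel (\<lambda>\<xi>. cis (x \<bullet> \<xi>) * (a (x, \<xi>) * \<eta> \<xi>))" by (rule b_int[OF H S Z])
  have normG: "norm (G \<xi> y) = norm (cis (x \<bullet> \<xi>) * (a (x, \<xi>) * \<eta> \<xi>)) * norm (f y)" for \<xi> y
    unfolding G_def by (simp add: norm_mult)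
  have intG: "integrable (lborel \<Otimes>\<^sub>M lborel) (\<lambda>(\<xi>, y). G \<xi> y)"
  proof (rule lborel_pair.Fubini_integrable[OF measG])
    have "(\<lambda>\<xi>. \<integral>y. norm (case (\<xi>, y) of (\<xi>, y) \<Rightarrow> G \<xi> y) \<partial>lborel)
        = (\<lambda>\<xi>. norm (cis (x \<bullet> \<xi>) * (a (x, \<xi>) * \<eta> \<xi>)) * (\<integral>y. norm (f y) \<partial>lborel))"
      by (simp add: normG)
    moreover have "integrable lborel (\<lambda>\<xi>. norm (cis (x \<bullet> \<xi>) * (a (x, \<xi>) * \<eta> \<xi>)) * (\<integral>y. norm (f y) \<partial>lborel))"
      using bi by (intro integrable_mult_left integrable_norm)
    ultimately show "integrable lborel (\<lambda>\<xi>. \<integral>y. norm (case (\<xi>, y) of (\<xi>, y) \<Rightarrow> G \<xi> y) \<partial>lborel)"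
      by simp
    show "AE \<xi> in lborel. integrable lborel (\<lambda>y. case (\<xi>, y) of (\<xi>, y) \<Rightarrow> G \<xi> y)"
    proof (rule AE_I2)
      fix \<xi> :: "real^'n"
      have m: "(\<lambda>y. G \<xi> y) \<in> borel_measurable lborel"
        using measurable_Pair2[OF measG, of \<xi>] by simp
      have "integrable lborel (\<lambda>y. G \<xi> y)"
        by (rule Bochner_Integration.integrable_bound[OF integrable_mult_left[OF integrable_norm[OF fi], of "norm (cis (x \<bullet> \<xi>) * (a (x, \<xi>) * \<eta> \<xi>))"] m])
           (simp add: normG)
      then show "integrable lborel (\<lambda>y. case (\<xi>, y) of (\<xi>, y) \<Rightarrow> G \<xi> y)" by simp
    qed
  qed
  have Gy: "G \<xi> y = f y * (cis ((x - y) \<bullet> \<xi>) * (a (x, \<xi>) * \<eta> \<xi>))" for \<xi> y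
  proof -
    have ce: "cis ((x - y) \<bullet> \<xi>) = cis (x \<bullet> \<xi>) * cis (- (y \<bullet> \<xi>))"
      by (simp add: inner_diff_left cis_mult)
    show ?thesis unfolding G_def ce by (simp only: mult_ac)
  qed
  have inner: "(\<integral>\<xi>. G \<xi> y \<partial>lborel) = f y * (\<integral>\<xi>. cis ((x - y) \<bullet> \<xi>) * (a (x, \<xi>) * \<eta> \<xi>) \<partial>lborel)" for y
    by (simp add: Gy)
  have "integrable lborel (\<lambda>y. \<integral>\<xi>. G \<xi> y \<partial>lborel)"
    by (rule lborel_pair.integrable_snd[OF intG])
  then show "integrable lborel (\<lambda>y. f y * (\<integral>\<xi>. cis ((x - y) \<bullet> \<xi>) * (a (x, \<xi>) * \<eta> \<xi>) \<partial>lborel))"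
    by (simp add: inner)
  have "pdo (\<lambda>(x, \<xi>). a (x, \<xi>) * \<eta> \<xi>) f x = (\<integral>\<xi>. (\<integral>y. G \<xi> y \<partial>lborel) \<partial>lborel)"
    unfolding pdo_def fourier_def G_def by simp
  also have "\<dots> = (\<integral>y. (\<integral>\<xi>. G \<xi> y \<partial>lborel) \<partial>lborel)"
    by (rule lborel_pair.Fubini_integral[OF intG, symmetric])
  also have "\<dots> = (\<integral>y. f y * (\<integral>\<xi>. cis ((x - y) \<bullet> \<xi>) * (a (x, \<xi>) * \<eta> \<xi>) \<partial>lborel) \<partial>lborel)"
    by (simp add: inner)
  finally show "pdo (\<lambda>(x, \<xi>). a (x, \<xi>) * \<eta> \<xi>) f x = (\<integral>y. f y * (\<integral>\<xi>. cis ((x - y) \<bullet> \<xi>) * (a (x, \<xi>) * \<eta> \<xi>) \<partial>lborel) \<partial>lborel)" .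
qed


end



lemma sqrt_split: "0 \<le> k \<Longrightarrow> 0 \<le> n \<Longrightarrow> ennreal (n * k) = ennreal (sqrt k) * ennreal (sqrt k * n)"
proof -
  assume k: "0 \<le> k" and n: "0 \<le> n"
  have "ennreal (sqrt k) * ennreal (sqrt k * n) = ennreal (sqrt k * (sqrt k * n))"
    using k n by (simp add: ennreal_mult)
  also have "sqrt k * (sqrt k * n) = n * k" using k by (simp add: mult.assoc[symmetric])
  finally show ?thesis ..
qed

lemma cont_ennreal_meas:
  fixes g :: "real^'n::finite \<Rightarrow> real"
  shows "continuous_on UNIV g \<Longrightarrow> (\<lambda>y. ennreal (g y)) \<in> borel_measurable lborel"
  using measurable_compose[OF borel_measurable_continuous_onI measurable_ennreal] by simp

lemma kern_shift_cont: "continuous_on UNIV (\<lambda>y::real^'n::finite. kern (x - y))"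
  by (rule continuous_on_compose2[OF kern_cont]) (auto intro!: continuous_intros)

context
  fixes a :: "(real^'n::finite) \<times> (real^'n) \<Rightarrow> complex" and \<eta> :: "real^'n \<Rightarrow> complex"
    and m \<rho> \<delta> :: real
  assumes H: "hoermander m \<rho> \<delta> a" and S: "smooth \<eta>" and Z: "\<And>\<xi>. 2 < norm \<xi> \<Longrightarrow> \<eta> \<xi> = 0"
begin

lemma pdo_sq_bound:
  "\<exists>Cp\<ge>0. \<forall>f x. schwartz f \<longrightarrow>
     ennreal ((norm (pdo (\<lambda>(x, \<xi>). a (x, \<xi>) * \<eta> \<xi>) f x))\<^sup>2)
       \<le> ennreal Cp * (\<integral>\<^sup>+y. ennreal (kern (x - y) * (norm (f y))\<^sup>2) \<partial>lborel)"
proof -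
  obtain CK where CK: "CK \<ge> 0" "\<And>x z. norm (\<integral>\<xi>. cis (z \<bullet> \<xi>) * (a (x, \<xi>) * \<eta> \<xi>) \<partial>lborel) \<le> CK * kern z"
    using kernel_bound[OF H S Z] by blast
  show ?thesis
  proof (intro exI[of _ "CK^2 * c0 TYPE('n)"] conjI allI impI)
    show "CK^2 * c0 TYPE('n) \<ge> 0" using c0_nonneg[where 'n='n] by simp
    fix f :: "real^'n \<Rightarrow> complex" and x :: "real^'n"
    assume sf: "schwartz f"
    have cf: "continuous_on UNIV f" by (rule schwartz_cont[OF sf])
    have ck: "continuous_on UNIV (\<lambda>y. kern (x - y))" by (rule kern_shift_cont)
    define P where "P = pdo (\<lambda>(x, \<xi>). a (x, \<xi>) * \<eta> \<xi>) f x"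
    define Kx where "Kx = (\<lambda>y. \<integral>\<xi>. cis ((x - y) \<bullet> \<xi>) * (a (x, \<xi>) * \<eta> \<xi>) \<partial>lborel)"
    define I where "I = (\<integral>\<^sup>+y. ennreal (norm (f y) * kern (x - y)) \<partial>lborel)"
    define J where "J = (\<integral>\<^sup>+y. ennreal (kern (x - y) * (norm (f y))\<^sup>2) \<partial>lborel)"
    have Pe: "P = (\<integral>y. f y * Kx y \<partial>lborel)" unfolding P_def Kx_def by (rule pdo_repr(2)[OF H S Z sf])
    have Ki: "integrable lborel (\<lambda>y. f y * Kx y)" unfolding Kx_def by (rule pdo_repr(1)[OF H S Z sf])
    have "ennreal (norm P) \<le> (\<integral>\<^sup>+y. norm (f y * Kx y) \<partial>lborel)"
      unfolding Pe by (rule integral_norm_bound_ennreal[OF Ki])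
    also have "\<dots> \<le> (\<integral>\<^sup>+y. ennreal CK * ennreal (norm (f y) * kern (x - y)) \<partial>lborel)"
    proof (rule nn_integral_mono)
      fix y
      have "norm (f y * Kx y) \<le> norm (f y) * (CK * kern (x - y))"
        unfolding Kx_def norm_mult by (rule mult_left_mono[OF CK(2)]) simp
      then show "ennreal (norm (f y * Kx y)) \<le> ennreal CK * ennreal (norm (f y) * kern (x - y))"
        using CK(1) kern_nonneg[of "x - y"] by (simp add: ennreal_mult[symmetric] mult_ac ennreal_leI)
    qed
    also have "\<dots> = ennreal CK * I"
      unfolding I_def by (rule nn_integral_cmult, rule cont_ennreal_meas) (use cf ck in \<open>auto intro!: continuous_intros\<close>)
    finally have P1: "ennreal (norm P) \<le> ennreal CK * I" .
    have CS: "I^2 \<le> ennreal (c0 TYPE('n)) * J"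
    proof -
      have "I^2 = (\<integral>\<^sup>+y. ennreal (sqrt (kern (x - y))) * ennreal (sqrt (kern (x - y)) * norm (f y)) \<partial>lborel)^2"
        unfolding I_def
        by (intro arg_cong[where f="\<lambda>t. t^2"] nn_integral_cong sqrt_split kern_nonneg norm_ge_zero)
      also have "\<dots> \<le> (\<integral>\<^sup>+y. ennreal (sqrt (kern (x - y))) ^ 2 \<partial>lborel) * (\<integral>\<^sup>+y. ennreal (sqrt (kern (x - y)) * norm (f y)) ^ 2 \<partial>lborel)"
        by (rule Cauchy_Schwarz_nn_integral; rule cont_ennreal_meas) (use cf ck in \<open>auto intro!: continuous_intros\<close>)
      also have "(\<integral>\<^sup>+y. ennreal (sqrt (kern (x - y))) ^ 2 \<partial>lborel) = (\<integral>\<^sup>+y. ennreal (kern (y - x)) \<partial>lborel)"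
        by (intro nn_integral_cong) (simp add: ennreal_power kern_nonneg kern_sym[of x])
      also have "(\<integral>\<^sup>+y. ennreal (sqrt (kern (x - y)) * norm (f y)) ^ 2 \<partial>lborel) = J"
        unfolding J_def by (intro nn_integral_cong) (simp add: ennreal_power kern_nonneg power_mult_distrib)
      finally have "I^2 \<le> (\<integral>\<^sup>+y. ennreal (kern (y - x)) \<partial>lborel) * J" .
      also have "\<dots> \<le> ennreal (c0 TYPE('n)) * J" by (intro mult_right_mono kern_int) simp
      finally show ?thesis .
    qed
    have "ennreal ((norm P)\<^sup>2) = ennreal (norm P)^2" by (simp add: ennreal_power)
    also have "\<dots> \<le> (ennreal CK * I)^2" by (rule power_mono[OF P1]) simp
    also have "\<dots> = ennreal (CK^2) * I^2" by (simp add: power_mult_distrib ennreal_power CK(1))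
    also have "\<dots> \<le> ennreal (CK^2) * (ennreal (c0 TYPE('n)) * J)" by (rule mult_left_mono[OF CS]) simp
    also have "\<dots> = ennreal (CK^2 * c0 TYPE('n)) * J" by (simp add: ennreal_mult c0_nonneg mult.assoc)
    finally show "ennreal ((norm (pdo (\<lambda>(x, \<xi>). a (x, \<xi>) * \<eta> \<xi>) f x))\<^sup>2)
       \<le> ennreal (CK^2 * c0 TYPE('n)) * (\<integral>\<^sup>+y. ennreal (kern (x - y) * (norm (f y))\<^sup>2) \<partial>lborel)"
      unfolding P_def J_def .
  qed
qed


lemma main_bound:
  "\<exists>C::real. \<forall>(w::real^'n \<Rightarrow> real) (f::real^'n \<Rightarrow> complex).
           (\<forall>x. 0 \<le> w x) \<longrightarrow> loc_integrable w \<longrightarrow> schwartz f \<longrightarrow>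
           (\<integral>\<^sup>+ x. ennreal ((norm (pdo (\<lambda>(x, \<xi>). a (x, \<xi>) * \<eta> \<xi>) f x))\<^sup>2 * w x) \<partial>lborel)
             \<le> ennreal C * (\<integral>\<^sup>+ x. ennreal ((norm (f x))\<^sup>2) * A1star w x \<partial>lborel)"
proof -
  obtain Cp where Cp: "Cp \<ge> 0" "\<And>f x. schwartz f \<Longrightarrow>
     ennreal ((norm (pdo (\<lambda>(x, \<xi>). a (x, \<xi>) * \<eta> \<xi>) f x))\<^sup>2)
       \<le> ennreal Cp * (\<integral>\<^sup>+y. ennreal (kern (x - y) * (norm (f y))\<^sup>2) \<partial>lborel)"
    using pdo_sq_bound by blast
  let ?c = "c0 TYPE('n)"
  have c0n: "?c \<ge> 0" by (rule c0_nonneg)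
  show ?thesis
  proof (intro exI[of _ "Cp * ?c"] allI impI)
    fix w :: "real^'n \<Rightarrow> real" and f :: "real^'n \<Rightarrow> complex"
    assume w0: "\<forall>x. 0 \<le> w x" and wl: "loc_integrable w" and sf: "schwartz f"
    have wm[measurable]: "w \<in> borel_measurable borel" using wl unfolding loc_integrable_def by simp
    have fm[measurable]: "f \<in> borel_measurable borel" by (rule schwartz_meas[OF sf])
    define H where "H = (\<lambda>x y. ennreal (kern (x - y) * (norm (f y))\<^sup>2) * ennreal (w x))"
    have Hm: "(\<lambda>(x, y). H x y) \<in> borel_measurable (lborel \<Otimes>\<^sub>M lborel)"
    proof -
      have c1: "continuous_on UNIV (\<lambda>p::(real^'n) \<times> (real^'n). kern (fst p - snd p) * (norm (f (snd p)))\<^sup>2)"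
      proof -
        have "continuous_on UNIV (\<lambda>p::(real^'n) \<times> (real^'n). kern (fst p - snd p))"
          by (rule continuous_on_compose2[OF kern_cont]) (auto intro!: continuous_intros)
        moreover have "continuous_on UNIV (\<lambda>p::(real^'n) \<times> (real^'n). f (snd p))"
          by (rule continuous_on_compose2[OF schwartz_cont[OF sf]]) (auto intro!: continuous_intros)
        ultimately show ?thesis by (intro continuous_intros)
      qed
      have m1: "(\<lambda>p::(real^'n) \<times> (real^'n). kern (fst p - snd p) * (norm (f (snd p)))\<^sup>2) \<in> borel_measurable borel"
        by (rule borel_measurable_continuous_onI[OF c1])
      have mf: "(fst :: (real^'n) \<times> (real^'n) \<Rightarrow> real^'n) \<in> borel_measurable borel"
        by (rule borel_measurable_continuous_onI) (auto intro!: continuous_intros)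
      have m2: "(\<lambda>p::(real^'n) \<times> (real^'n). w (fst p)) \<in> borel_measurable borel"
        by (rule measurable_compose[OF mf wm])
      have "(\<lambda>p::(real^'n) \<times> (real^'n). ennreal (kern (fst p - snd p) * (norm (f (snd p)))\<^sup>2) * ennreal (w (fst p))) \<in> borel_measurable borel"
        using m1 m2 by (intro borel_measurable_times_ennreal measurable_compose[OF _ measurable_ennreal])
      moreover have "(\<lambda>(x, y). H x y) = (\<lambda>p::(real^'n) \<times> (real^'n). ennreal (kern (fst p - snd p) * (norm (f (snd p)))\<^sup>2) * ennreal (w (fst p)))"
        unfolding H_def by auto
      ultimately show ?thesis by (simp add: lborel_prod)
    qed
    have "(\<integral>\<^sup>+ x. ennreal ((norm (pdo (\<lambda>(x, \<xi>). a (x, \<xi>) * \<eta> \<xi>) f x))\<^sup>2 * w x) \<partial>lborel)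
        \<le> (\<integral>\<^sup>+ x. ennreal Cp * ((\<integral>\<^sup>+y. ennreal (kern (x - y) * (norm (f y))\<^sup>2) \<partial>lborel) * ennreal (w x)) \<partial>lborel)"
    proof (rule nn_integral_mono)
      fix x
      have "ennreal ((norm (pdo (\<lambda>(x, \<xi>). a (x, \<xi>) * \<eta> \<xi>) f x))\<^sup>2 * w x)
          = ennreal ((norm (pdo (\<lambda>(x, \<xi>). a (x, \<xi>) * \<eta> \<xi>) f x))\<^sup>2) * ennreal (w x)"
        using w0 by (simp add: ennreal_mult)
      also have "\<dots> \<le> (ennreal Cp * (\<integral>\<^sup>+y. ennreal (kern (x - y) * (norm (f y))\<^sup>2) \<partial>lborel)) * ennreal (w x)"
        by (rule mult_right_mono[OF Cp(2)[OF sf]]) simp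
      finally show "ennreal ((norm (pdo (\<lambda>(x, \<xi>). a (x, \<xi>) * \<eta> \<xi>) f x))\<^sup>2 * w x)
          \<le> ennreal Cp * ((\<integral>\<^sup>+y. ennreal (kern (x - y) * (norm (f y))\<^sup>2) \<partial>lborel) * ennreal (w x))"
        by (simp add: mult.assoc)
    qed
    also have "\<dots> \<le> ennreal Cp * (\<integral>\<^sup>+ x. (\<integral>\<^sup>+y. ennreal (kern (x - y) * (norm (f y))\<^sup>2) \<partial>lborel) * ennreal (w x) \<partial>lborel)"
      by (rule nn_integral_cmult_le) simp
    also have "(\<integral>\<^sup>+ x. (\<integral>\<^sup>+y. ennreal (kern (x - y) * (norm (f y))\<^sup>2) \<partial>lborel) * ennreal (w x) \<partial>lborel)
        = (\<integral>\<^sup>+ x. (\<integral>\<^sup>+y. H x y \<partial>lborel) \<partial>lborel)"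
      unfolding H_def by (intro nn_integral_cong nn_integral_multc[symmetric]) measurable
    also have "\<dots> = (\<integral>\<^sup>+ y. (\<integral>\<^sup>+x. H x y \<partial>lborel) \<partial>lborel)"
      by (rule lborel_pair.Fubini'[OF Hm, symmetric])
    also have "\<dots> \<le> (\<integral>\<^sup>+ y. ennreal ?c * (ennreal ((norm (f y))\<^sup>2) * A1star w y) \<partial>lborel)"
    proof (rule nn_integral_mono)
      fix y
      have "(\<integral>\<^sup>+x. H x y \<partial>lborel) = (\<integral>\<^sup>+x. ennreal ((norm (f y))\<^sup>2) * (ennreal (w x) * ennreal (1 / (1 + norm (x - y))^(CARD('n)+1))) \<partial>lborel)"
        unfolding H_def kern_def
        by (intro nn_integral_cong) (simp add: ennreal_mult[symmetric] mult_ac)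
      also have "\<dots> = ennreal ((norm (f y))\<^sup>2) * (\<integral>\<^sup>+x. ennreal (w x) * ennreal (1 / (1 + norm (x - y))^(CARD('n)+1)) \<partial>lborel)"
        by (rule nn_integral_cmult) measurable
      also have "\<dots> \<le> ennreal ((norm (f y))\<^sup>2) * (ennreal (unit_ball_vol (CARD('n)) * 2^(CARD('n)+2)) * A1star w y)"
        by (intro mult_left_mono weight_bound A1star_ball) (auto simp: wm)
      finally show "(\<integral>\<^sup>+x. H x y \<partial>lborel) \<le> ennreal ?c * (ennreal ((norm (f y))\<^sup>2) * A1star w y)"
        by (simp add: c0_def mult_ac)
    qed
    also have "\<dots> \<le> ennreal ?c * (\<integral>\<^sup>+ y. ennreal ((norm (f y))\<^sup>2) * A1star w y \<partial>lborel)"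
      by (rule nn_integral_cmult_le) simp
    finally show "(\<integral>\<^sup>+ x. ennreal ((norm (pdo (\<lambda>(x, \<xi>). a (x, \<xi>) * \<eta> \<xi>) f x))\<^sup>2 * w x) \<partial>lborel)
             \<le> ennreal (Cp * ?c) * (\<integral>\<^sup>+ x. ennreal ((norm (f x))\<^sup>2) * A1star w x \<partial>lborel)"
      using Cp(1) c0n by (simp add: ennreal_mult mult.assoc mult_left_mono)
  qed
qed

end

theorem proposition4p1:
  fixes m \<rho> \<delta> :: real
    and a :: "(real^'n::finite) \<times> (real^'n) \<Rightarrow> complex"
    and \<eta> :: "real^'n \<Rightarrow> complex"
  assumes "0 \<le> \<delta>" "\<delta> \<le> \<rho>" "\<rho> \<le> 1" "\<delta> < 1"
    and "hoermander m \<rho> \<delta> a"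
    and "smooth \<eta>" "\<forall>\<xi>. 2 < norm \<xi> \<longrightarrow> \<eta> \<xi> = 0"
  shows "\<exists>C::real. \<forall>(w::real^'n \<Rightarrow> real) (f::real^'n \<Rightarrow> complex).
           (\<forall>x. 0 \<le> w x) \<longrightarrow> loc_integrable w \<longrightarrow> schwartz f \<longrightarrow>
           (\<integral>\<^sup>+ x. ennreal ((norm (pdo (\<lambda>(x, \<xi>). a (x, \<xi>) * \<eta> \<xi>) f x))\<^sup>2 * w x) \<partial>lborel)
             \<le> ennreal C * (\<integral>\<^sup>+ x. ennreal ((norm (f x))\<^sup>2) * A1star w x \<partial>lborel)"
proof -
  have Z: "\<And>\<xi>. 2 < norm \<xi> \<Longrightarrow> \<eta> \<xi> = 0" using assms(7) by blast
  show ?thesis by (rule main_bound[OF assms(5) assms(6) Z])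
qed

end
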